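(* Let $n\ge1$, $\tau:=2n+3$, $K>0$, $a\in(0,1)$, $\rho_0>0$, $\sigma_0>0$, and let $0<\epsilon_0\le aK^{-1}(2\pi)^{-2\tau}$. Then there exists a real sequence $\{d_j\}_{j\in\mathbb{N}}$ with $0\le d_j\le1/6$ for all $j$ such that the sequences defined recursively by $$\epsilon_{j+1}:=Ka^{-1}d_j^{-\tau}\epsilon_j^2,\qquad (\rho_{j+1},\sigma_{j+1}):=(1-3d_j)(\rho_j,\sigma_j)$$ satisfy $\lim_{j\to\infty}\epsilon_j=0$ and $\rho_j\ge\rho_0/2$, $\sigma_j\ge\sigma_0/2$ for all $j$ (so the limits $\rho_*:=\rho_0/2$, $\sigma_*:=\sigma_0/2$ serve as strictly positive lower bounds). *)

theory Defs
  imports Complex_Main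
begin

primrec eps_seq :: "nat \<Rightarrow> real \<Rightarrow> real \<Rightarrow> (nat \<Rightarrow> real) \<Rightarrow> real \<Rightarrow> nat \<Rightarrow> real" where
  "eps_seq tau K a d e0 0 = e0"
| "eps_seq tau K a d e0 (Suc j) =
     K * inverse a * inverse (d j ^ tau) * (eps_seq tau K a d e0 j)\<^sup>2"

primrec shrink_seq :: "(nat \<Rightarrow> real) \<Rightarrow> real \<Rightarrow> nat \<Rightarrow> real" where
  "shrink_seq d r0 0 = r0"
| "shrink_seq d r0 (Suc j) = (1 - 3 * d j) * shrink_seq d r0 j"

end

theory Submission
  imports Defs "HOL-Analysis.Complex_Transcendental"
begin

lemma shrink_bound:
  assumes "r0 > 0"
  shows "shrink_seq (\<lambda>j. 1/12 * (1/2::real)^j) r0 j \<ge> r0 * (1/2 + (1/2)^(j+1))"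
proof (induction j)
  case 0 then show ?case by simp
next
  case (Suc j)
  define t :: real where "t = (1/2)^(j+1)"
  have t0: "0 \<le> t" and t1: "t \<le> 1/2" unfolding t_def
    by (simp_all add: power_le_one)
  have d: "1 - 3 * (1/12 * (1/2::real)^j) = 1 - t/2" unfolding t_def by simp
  have pos: "0 \<le> 1 - t/2" using t1 by simp
  have "shrink_seq (\<lambda>j. 1/12 * (1/2::real)^j) r0 (Suc j)
      = (1 - t/2) * shrink_seq (\<lambda>j. 1/12 * (1/2::real)^j) r0 j" using d by simp
  also have "\<dots> \<ge> (1 - t/2) * (r0 * (1/2 + t))"
    using Suc pos unfolding t_def by (intro mult_left_mono) auto
  finally have "shrink_seq (\<lambda>j. 1/12 * (1/2::real)^j) r0 (Suc j) \<ge> (1 - t/2) * (r0 * (1/2 + t))" .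
  moreover have "(1 - t/2) * (r0 * (1/2 + t)) \<ge> r0 * (1/2 + t/2)"
  proof -
    have "t * (1/2 - t) \<ge> 0" using t0 t1 by simp
    then have "(1 - t/2) * (1/2 + t) \<ge> 1/2 + t/2"
      by (simp add: algebra_simps power2_eq_square)
    then show ?thesis using assms by (smt (verit) mult.commute mult_left_mono mult.assoc)
  qed
  moreover have "(1/2::real)^(Suc j + 1) = t/2" unfolding t_def by simp
  ultimately show ?case by simp
qed

lemma eps_bound:
  fixes K a eps0 :: real and tau :: nat
  assumes K: "K > 0" and a: "a > 0" and e0: "0 \<le> eps0"
    and small: "K / a * eps0 * 24 ^ tau \<le> 1"
  shows "0 \<le> eps_seq tau K a (\<lambda>j. 1/12 * (1/2::real)^j) eps0 j \<and>
         eps_seq tau K a (\<lambda>j. 1/12 * (1/2::real)^j) eps0 j \<le> eps0 * ((1/2)^tau)^j"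
proof (induction j)
  case 0 then show ?case using e0 by simp
next
  case (Suc j)
  define e where "e = eps_seq tau K a (\<lambda>j. 1/12 * (1/2::real)^j) eps0 j"
  define q :: real where "q = (1/2)^tau"
  have q0: "q > 0" unfolding q_def by simp
  have e: "0 \<le> e" "e \<le> eps0 * q^j" using Suc unfolding e_def q_def by auto
  have inv: "inverse ((1/12 * (1/2::real)^j) ^ tau) = 12^tau * (2^tau)^j"
  proof -
    have A: "(1/12 * (1/2::real)^j) ^ tau = (1/12)^tau * ((1/2)^j)^tau" by (rule power_mult_distrib)
    have B: "((1/2::real)^j)^tau = ((1/2)^tau)^j" by (metis power_mult mult.commute)
    have C: "(1/12::real)^tau = inverse (12^tau)" by (simp add: power_one_over inverse_eq_divide)
    have D: "((1/2::real)^tau)^j = inverse ((2^tau)^j)" by (simp add: power_one_over inverse_eq_divide)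
    show ?thesis unfolding A B C D by (simp add: inverse_mult_distrib)
  qed
  have eq: "eps_seq tau K a (\<lambda>j. 1/12 * (1/2::real)^j) eps0 (Suc j) = (K / a * 12^tau * (2^tau)^j) * e^2"
    unfolding e_def by (simp only: eps_seq.simps inv) (simp only: divide_inverse mult.assoc)
  have c0: "0 \<le> K / a * 12^tau * (2^tau)^j" using K a by simp
  have "e^2 \<le> (eps0 * q^j)^2" using e by (intro power_mono) auto
  then have "(K / a * 12^tau * (2^tau)^j) * e^2 \<le> (K / a * 12^tau * (2^tau)^j) * (eps0 * q^j)^2"
    using c0 by (rule mult_left_mono)
  also have "\<dots> = (K / a * 12^tau * eps0) * (eps0 * q^j) * ((2^tau * q)^j)"
    by (simp add: power2_eq_square power_mult_distrib mult_ac)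
  also have q2: "(2::real)^tau * q = 1" unfolding q_def by (simp add: power_one_over)
  also have "(K / a * 12^tau * eps0) * (eps0 * q^j) * 1^j = (K / a * eps0 * 24^tau) * (eps0 * q^(Suc j))"
  proof -
    have h24: "(24::real)^tau = 12^tau * 2^tau" by (simp flip: power_mult_distrib)
    have "(K / a * eps0 * 24^tau) * (eps0 * q^(Suc j)) = (K / a * 12^tau * eps0) * (eps0 * q^j) * (2^tau * q)"
      by (simp add: h24 mult_ac)
    then show ?thesis using q2 by (metis mult_1_right power_one)
  qed
  also have "\<dots> \<le> 1 * (eps0 * q^(Suc j))"
    using small e0 q0 by (intro mult_right_mono) auto
  finally have up: "eps_seq tau K a (\<lambda>j. 1/12 * (1/2::real)^j) eps0 (Suc j) \<le> eps0 * q^(Suc j)"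
    using eq by simp
  have "0 \<le> (K / a * 12^tau * (2^tau)^j) * e^2" by (rule mult_nonneg_nonneg[OF c0]) simp
  then have "0 \<le> eps_seq tau K a (\<lambda>j. 1/12 * (1/2::real)^j) eps0 (Suc j)"
    by (subst eq)
  then show ?case using up unfolding q_def by simp
qed

theorem lemma2:
  fixes n :: nat and K a rho0 sigma0 eps0 :: real
  assumes "n \<ge> 1"
    and "K > 0" and "0 < a" and "a < 1"
    and "rho0 > 0" and "sigma0 > 0"
    and "0 < eps0" and "eps0 \<le> a * inverse K * inverse ((2 * pi) ^ (2 * (2 * n + 3)))"
  shows "\<exists>d :: nat \<Rightarrow> real.
           (\<forall>j. 0 < d j \<and> d j \<le> 1 / 6) \<and>
           (eps_seq (2 * n + 3) K a d eps0 \<longlonglongrightarrow> 0) \<and>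
           (\<forall>j. shrink_seq d rho0 j \<ge> rho0 / 2) \<and>
           (\<forall>j. shrink_seq d sigma0 j \<ge> sigma0 / 2)"
proof (intro exI conjI allI)
  define d :: "nat \<Rightarrow> real" where "d = (\<lambda>j. 1/12 * (1/2::real)^j)"
  define tau where "tau = 2 * n + 3"
  fix j
  show "0 < (\<lambda>j. 1/12 * (1/2::real)^j) j" by simp
  show "(\<lambda>j. 1/12 * (1/2::real)^j) j \<le> 1/6"
  proof -
    have "(1/2::real)^j \<le> 1" by (simp add: power_le_one)
    then show ?thesis by simp
  qed
next
  fix j
  have "rho0 / 2 \<le> rho0 * (1/2 + (1/2)^(j+1))" using assms(5) by simp
  then show "rho0 / 2 \<le> shrink_seq (\<lambda>j. 1/12 * (1/2::real)^j) rho0 j"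
    using shrink_bound[OF assms(5), of j] by linarith
next
  fix j
  have "sigma0 / 2 \<le> sigma0 * (1/2 + (1/2)^(j+1))" using assms(6) by simp
  then show "sigma0 / 2 \<le> shrink_seq (\<lambda>j. 1/12 * (1/2::real)^j) sigma0 j"
    using shrink_bound[OF assms(6), of j] by linarith
next
  define tau where "tau = 2 * n + 3"
  have p6: "(6::real) \<le> 2*pi" using pi_gt3 by simp
  have "(6::real)^2 \<le> (2*pi)^2" by (rule power_mono[OF p6]) simp
  then have pi3: "(24::real) \<le> (2*pi)^2" by simp
  have pw: "(24::real)^tau \<le> (2*pi)^(2*tau)"
    unfolding power_mult by (rule power_mono[OF pi3]) simp
  have "K / a * eps0 \<le> inverse ((2 * pi) ^ (2 * tau))"
    using assms(2,3,8) unfolding tau_def by (simp add: field_simps)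
  then have "K / a * eps0 * 24^tau \<le> inverse ((2 * pi) ^ (2 * tau)) * (2*pi)^(2*tau)"
    using pw assms by (intro mult_mono) auto
  also have "\<dots> = 1" by (rule left_inverse) simp
  finally have small: "K / a * eps0 * 24 ^ tau \<le> 1" .
  note B = eps_bound[OF assms(2) assms(3) less_imp_le[OF assms(7)] small]
  have lim: "(\<lambda>j. eps0 * ((1/2::real)^tau)^j) \<longlonglongrightarrow> 0"
  proof (intro tendsto_mult_right_zero LIMSEQ_power_zero)
    have "(1/2::real)^tau < (1/2)^0"
      unfolding tau_def by (rule power_strict_decreasing) auto
    then show "norm ((1/2::real)^tau) < 1" by simp
  qed
  show "eps_seq (2 * n + 3) K a (\<lambda>j. 1/12 * (1/2::real)^j) eps0 \<longlonglongrightarrow> 0"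
    unfolding tau_def[symmetric]
    by (rule real_tendsto_sandwich[OF _ _ tendsto_const lim]) (use B in auto)
qed

end
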